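(* Consider a resource theory with a class $\mathbb{O}$ of free operations, and let $\mathfrak{R}$ be a nonnegative function on states that is monotone ($\mathfrak{R}(\Lambda(\omega))\le\mathfrak{R}(\omega)$ for all $\Lambda\in\mathbb{O}$), tensor-product additive ($\mathfrak{R}(\omega\otimes\omega')=\mathfrak{R}(\omega)+\mathfrak{R}(\omega')$) and superadditive ($\mathfrak{R}(\tau)\ge\mathfrak{R}(\mathrm{Tr}_B\tau)+\mathfrak{R}(\mathrm{Tr}_A\tau)$ for every state $\tau$ on $AB$). Then for all states $\rho,\rho'$ and every $r<\tilde R^0(\rho\to\rho')$, one has $\mathfrak{R}(\rho)\ge r\,\mathfrak{R}(\rho')$; i.e., $\mathfrak{R}(\rho)\ge\tilde R^0(\rho\to\rho')\,\mathfrak{R}(\rho')$.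
   Context: $\tilde R^0(\rho\to\rho')=\limsup_{n\to\infty}\sup\{r:\exists\Lambda_n\in\mathbb{O},\ \Lambda_n:S^{\otimes n}\to S'^{\otimes\lfloor rn\rfloor},\ \mathrm{Tr}_{\setminus i}\Lambda_n(\rho^{\otimes n})=\rho'\ \forall i\}$, where $\mathrm{Tr}_{\setminus i}$ is the reduced state on the $i$-th output copy. *)

theory Defs
  imports "HOL-Analysis.Analysis" "HOL-Library.Extended_Real"
begin

text \<open>Finite-dimensional quantum systems are identified with their dimension d.
  An operator on a d-dimensional system is a function nat => nat => complex
  (matrix entries), required to vanish outside the index range d x d.\<close>

type_synonym cmat = "nat \<Rightarrow> nat \<Rightarrow> complex"

definition is_state :: "nat \<Rightarrow> cmat \<Rightarrow> bool" where
  "is_state d \<rho> \<longleftrightarrow>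
     (\<forall>i j. (d \<le> i \<or> d \<le> j) \<longrightarrow> \<rho> i j = 0) \<and>
     (\<forall>i<d. \<forall>j<d. \<rho> j i = cnj (\<rho> i j)) \<and>
     (\<forall>v :: nat \<Rightarrow> complex. 0 \<le> Re (\<Sum>i<d. \<Sum>j<d. cnj (v i) * \<rho> i j * v j)) \<and>
     (\<Sum>i<d. \<rho> i i) = 1"

text \<open>Tensor product of an operator on A (dim dA) and one on B (dim dB);
  index of AB is a*dB + b.\<close>
definition tensor :: "nat \<Rightarrow> nat \<Rightarrow> cmat \<Rightarrow> cmat \<Rightarrow> cmat" where
  "tensor dA dB \<rho> \<sigma> = (\<lambda>i j. if i < dA * dB \<and> j < dA * dB
      then \<rho> (i div dB) (j div dB) * \<sigma> (i mod dB) (j mod dB) else 0)"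

definition ptrace_B :: "nat \<Rightarrow> nat \<Rightarrow> cmat \<Rightarrow> cmat" where
  "ptrace_B dA dB \<tau> = (\<lambda>a b. if a < dA \<and> b < dA
      then (\<Sum>k<dB. \<tau> (a * dB + k) (b * dB + k)) else 0)"

definition ptrace_A :: "nat \<Rightarrow> nat \<Rightarrow> cmat \<Rightarrow> cmat" where
  "ptrace_A dA dB \<tau> = (\<lambda>a b. if a < dB \<and> b < dB
      then (\<Sum>k<dA. \<tau> (k * dB + a) (k * dB + b)) else 0)"

text \<open>n-fold tensor power (on dimension d^n); copy 0 is the leftmost factor.\<close>
fun tpow :: "nat \<Rightarrow> nat \<Rightarrow> cmat \<Rightarrow> cmat" where
  "tpow d 0 \<rho> = (\<lambda>i j. if i = 0 \<and> j = 0 then 1 else 0)"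
| "tpow d (Suc n) \<rho> = tensor d (d ^ n) \<rho> (tpow d n \<rho>)"

text \<open>k-th base-d digit of an index of a system of m copies (copy 0 most significant).\<close>
definition digit :: "nat \<Rightarrow> nat \<Rightarrow> nat \<Rightarrow> nat \<Rightarrow> nat" where
  "digit d m k x = (x div d ^ (m - 1 - k)) mod d"

text \<open>Reduced state on the k-th copy of an operator on m copies of a d-dim system
  (partial trace over all other copies).\<close>
definition marg :: "nat \<Rightarrow> nat \<Rightarrow> nat \<Rightarrow> cmat \<Rightarrow> cmat" where
  "marg d m k \<omega> = (\<lambda>a b. if a < d \<and> b < d then
      (\<Sum>x<d ^ m. \<Sum>y<d ^ m.
         if digit d m k x = a \<and> digit d m k y = b \<and>
            (\<forall>l<m. l \<noteq> k \<longrightarrow> digit d m l x = digit d m l y)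
         then \<omega> x y else 0)
      else 0)"

text \<open>A class of operations: triples (input dimension, output dimension, map).\<close>
type_synonym ops = "(nat \<times> nat \<times> (cmat \<Rightarrow> cmat)) set"

text \<open>r is an achievable rate at blocklength n: some free operation maps
  rho^{(x)n} on S^{(x)n} to S'^{(x) floor(r n)} with every single-copy marginal equal to rho'.\<close>
definition achievable :: "ops \<Rightarrow> nat \<Rightarrow> cmat \<Rightarrow> nat \<Rightarrow> cmat \<Rightarrow> nat \<Rightarrow> real \<Rightarrow> bool" where
  "achievable Ops d \<rho> d' \<rho>' n r \<longleftrightarrow> 0 \<le> r \<and>
     (\<exists>\<Lambda>. (d ^ n, d' ^ nat \<lfloor>r * real n\<rfloor>, \<Lambda>) \<in> Ops \<and>
        (\<forall>i < nat \<lfloor>r * real n\<rfloor>.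
            marg d' (nat \<lfloor>r * real n\<rfloor>) i (\<Lambda> (tpow d n \<rho>)) = \<rho>'))"

definition Rtilde0 :: "ops \<Rightarrow> nat \<Rightarrow> cmat \<Rightarrow> nat \<Rightarrow> cmat \<Rightarrow> ereal" where
  "Rtilde0 Ops d \<rho> d' \<rho>' =
     limsup (\<lambda>n. Sup {ereal r | r. achievable Ops d \<rho> d' \<rho>' n r})"

end

theory Submission
  imports Defs
begin


lemma sum_split_mult:
  "(\<Sum>i<a*b. f i) = (\<Sum>x<a. \<Sum>y<b. f (x*b + y)) " for f :: "nat \<Rightarrow> 'b::comm_monoid_add"
proof (induction a)
  case 0 then show ?case by simp
next
  case (Suc a)
  have "(\<Sum>i<Suc a*b. f i) = (\<Sum>i<a*b. f i) + (\<Sum>i\<in>{a*b..<a*b+b}. f i)"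
    by (simp add: add.commute sum.atLeastLessThan_concat[symmetric] lessThan_atLeast0
          sum.atLeastLessThan_concat)
  also have "(\<Sum>i\<in>{a*b..<a*b+b}. f i) = (\<Sum>y<b. f (a*b+y))"
    using sum.shift_bounds_nat_ivl[of f 0 "a*b" b] by (simp add: lessThan_atLeast0 add.commute)
  finally show ?case using Suc by simp
qed

definition qf :: "nat \<Rightarrow> cmat \<Rightarrow> (nat\<Rightarrow>complex) \<Rightarrow> complex" where
  "qf d \<sigma> v = (\<Sum>i<d. \<Sum>j<d. cnj (v i) * \<sigma> i j * v j)"

lemma qf_shift:
  assumes "s < d"
  shows "qf d \<sigma> (\<lambda>i. v i + (if i = s then t else 0)) =
    qf d \<sigma> v + cnj t * (\<Sum>j<d. \<sigma> s j * v j) + t * (\<Sum>i<d. cnj (v i) * \<sigma> i s)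
     + cnj t * \<sigma> s s * t"
proof -
  have "qf d \<sigma> (\<lambda>i. v i + (if i = s then t else 0)) =
     (\<Sum>i<d. \<Sum>j<d. cnj (v i) * \<sigma> i j * v j + (if j = s then cnj (v i) * \<sigma> i s * t else 0)
        + (if i = s then cnj t * \<sigma> s j * v j else 0) + (if i = s \<and> j = s then cnj t * \<sigma> s s * t else 0))"
    unfolding qf_def by (intro sum.cong refl) (auto simp: algebra_simps)
  also have "\<dots> = qf d \<sigma> v + (\<Sum>i<d. \<Sum>j<d. (if j = s then cnj (v i) * \<sigma> i s * t else 0))
     + (\<Sum>i<d. \<Sum>j<d. (if i = s then cnj t * \<sigma> s j * v j else 0))
     + (\<Sum>i<d. \<Sum>j<d. (if i = s \<and> j = s then cnj t * \<sigma> s s * t else 0))"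
    by (simp add: sum.distrib qf_def)
  also have "\<dots> = qf d \<sigma> v + cnj t * (\<Sum>j<d. \<sigma> s j * v j) + t * (\<Sum>i<d. cnj (v i) * \<sigma> i s)
     + cnj t * \<sigma> s s * t"
  proof -
    have h1: "(\<Sum>i<d. \<Sum>j<d. (if j = s then cnj (v i) * \<sigma> i s * t else 0)) = t * (\<Sum>i<d. cnj (v i) * \<sigma> i s)"
      using assms by (simp add: sum_distrib_left mult.commute mult.left_commute)
    have h2: "(\<Sum>i<d. \<Sum>j<d. (if i = s then cnj t * \<sigma> s j * v j else 0)) = cnj t * (\<Sum>j<d. \<sigma> s j * v j)"
      using assms by (subst sum.swap) (simp add: sum_distrib_left mult.assoc)
    have h3: "(\<Sum>i<d. \<Sum>j<d. (if i = s \<and> j = s then cnj t * \<sigma> s s * t else 0)) = cnj t * \<sigma> s s * t"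
    proof -
      have "(\<Sum>i<d. \<Sum>j<d. (if i = s \<and> j = s then cnj t * \<sigma> s s * t else 0))
        = (\<Sum>i<d. if i = s then (\<Sum>j<d. if j = s then cnj t * \<sigma> s s * t else 0) else 0)"
        by (intro sum.cong) auto
      then show ?thesis using assms by simp
    qed
    show ?thesis using h1 h2 h3 by (simp add: algebra_simps)
  qed
  finally show ?thesis .
qed

definition herm :: "nat \<Rightarrow> cmat \<Rightarrow> bool" where
  "herm d \<sigma> \<longleftrightarrow> (\<forall>i<d. \<forall>j<d. \<sigma> j i = cnj (\<sigma> i j))"

definition psd :: "nat \<Rightarrow> cmat \<Rightarrow> bool" where
  "psd d \<sigma> \<longleftrightarrow> (\<forall>v. 0 \<le> Re (qf d \<sigma> v))"

lemma qf_shift_Re: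
  assumes "s < d" "herm d \<sigma>"
  shows "Re (qf d \<sigma> (\<lambda>i. v i + (if i = s then t else 0))) =
    Re (qf d \<sigma> v) + 2 * Re (cnj t * (\<Sum>j<d. \<sigma> s j * v j)) + (cmod t)^2 * Re (\<sigma> s s)"
proof -
  define G where "G = (\<Sum>j<d. \<sigma> s j * v j)"
  have h1: "(\<Sum>i<d. cnj (v i) * \<sigma> i s) = cnj G"
  proof -
    have "\<sigma> i s = cnj (\<sigma> s i)" if "i < d" for i using assms that unfolding herm_def by blast
    then show ?thesis unfolding G_def by (auto intro!: sum.cong)
  qed
  have h3: "cnj t * \<sigma> s s * t = \<sigma> s s * of_real ((cmod t)^2)"
    by (metis complex_norm_square mult.commute mult.left_commute)
  have e: "qf d \<sigma> (\<lambda>i. v i + (if i = s then t else 0)) = qf d \<sigma> v + cnj t * G + t * cnj G + \<sigma> s s * of_real ((cmod t)^2)"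
    using qf_shift[OF assms(1), of \<sigma> v t] unfolding G_def[symmetric] h1 h3 .
  have r2: "Re (t * cnj G) = Re (cnj t * G)" by simp
  have r3: "Re (\<sigma> s s * of_real ((cmod t)^2)) = (cmod t)^2 * Re (\<sigma> s s)" by simp
  show ?thesis unfolding G_def[symmetric] e plus_complex.sel r2 r3 by simp
qed

lemma decomp_aux:
  assumes "herm d \<sigma>" "psd d \<sigma>" "\<forall>i<d. \<forall>j<d. i < s \<or> j < s \<longrightarrow> \<sigma> i j = 0" "n = d - s"
  shows "\<exists>ws. \<forall>i<d. \<forall>j<d. \<sigma> i j = (\<Sum>w\<leftarrow>ws. w i * cnj (w j))"
  using assms
proof (induction n arbitrary: s \<sigma>)
  case 0
  then show ?case by (intro exI[of _ "[]"]) auto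
next
  case (Suc n)
  then have sd: "s < d" by simp
  have hs: "\<sigma> j i = cnj (\<sigma> i j)" if "i < d" "j < d" for i j
    using Suc.prems(1) that unfolding herm_def by blast
  have ps: "0 \<le> Re (qf d \<sigma> v)" for v using Suc.prems(2) unfolding psd_def by auto
  have key: "0 \<le> Re (qf d \<sigma> v) + 2 * Re (cnj t * (\<Sum>j<d. \<sigma> s j * v j)) + (cmod t)^2 * Re (\<sigma> s s)" for v t
    using ps[of "\<lambda>i. v i + (if i = s then t else 0)"] qf_shift_Re[OF sd Suc.prems(1)] by simp
  have sreal: "\<sigma> s s = of_real (Re (\<sigma> s s))"
    using hs[OF sd sd] by (simp add: complex_eq_iff)
  show ?case
  proof (cases "\<sigma> s s = 0")
    case True
    have row: "\<sigma> s j = 0" if "j < d" for j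
    proof (rule ccontr)
      assume ne: "\<sigma> s j \<noteq> 0"
      define v where "v = (\<lambda>i::nat. if i = j then (1::complex) else 0)"
      have qv: "qf d \<sigma> v = \<sigma> j j"
      proof -
        have "cnj (v i) * \<sigma> i k * v k = (if k = j then (if i = j then \<sigma> i j else 0) else 0)" for i k
          by (simp add: v_def)
        then show ?thesis using that by (simp add: qf_def)
      qed
      have gv: "(\<Sum>k<d. \<sigma> s k * v k) = \<sigma> s j" using that by (simp add: v_def if_distrib cong: if_cong)
      define c where "c = (cmod (\<sigma> s j))^2"
      have cpos: "c > 0" using ne by (simp add: c_def)
      define lam where "lam = (\<bar>Re (\<sigma> j j)\<bar> + 1) / (2*c)"
      have "0 \<le> Re (\<sigma> j j) + 2 * Re (cnj (- of_real lam * \<sigma> s j) * \<sigma> s j)"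
        using key[of v "- of_real lam * \<sigma> s j"] True qv gv by simp
      moreover have "Re (cnj (- of_real lam * \<sigma> s j) * \<sigma> s j) = - lam * c"
        unfolding c_def cmod_power2 by (simp add: algebra_simps power2_eq_square)
      moreover have "2 * (lam * c) = \<bar>Re (\<sigma> j j)\<bar> + 1" using cpos by (simp add: lam_def)
      ultimately show False by linarith
    qed
    have z: "\<forall>i<d. \<forall>j<d. i < Suc s \<or> j < Suc s \<longrightarrow> \<sigma> i j = 0"
    proof (intro allI impI)
      fix i j assume ij: "i < d" "j < d" and "i < Suc s \<or> j < Suc s"
      then consider "i < s \<or> j < s" | "i = s" | "j = s" by linarith
      then show "\<sigma> i j = 0"
      proof cases
        case 1 then show ?thesis using Suc.prems(3) ij by auto
      next
        case 2 then show ?thesis using row ij by auto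
      next
        case 3 then show ?thesis using row[OF ij(1)] hs[OF sd ij(1)] by simp
      qed
    qed
    show ?thesis using Suc.IH[OF Suc.prems(1,2) z] Suc.prems(4) by simp
  next
    case False
    define c where "c = Re (\<sigma> s s)"
    have "0 \<le> c" using key[of "\<lambda>_. 0" 1] by (simp add: c_def qf_def)
    with False sreal have cpos: "c > 0" unfolding c_def by (metis less_eq_real_def of_real_0)
    have sc: "\<sigma> s s = of_real c" using sreal c_def by simp
    define w where "w = (\<lambda>i. \<sigma> i s / of_real (sqrt c))"
    define \<sigma>' where "\<sigma>' = (\<lambda>i j. \<sigma> i j - w i * cnj (w j))"
    have sq: "(complex_of_real (sqrt c))^2 = of_real c" using cpos by (simp flip: of_real_power)
    have ww: "w i * cnj (w j) = \<sigma> i s * cnj (\<sigma> j s) / of_real c" for i j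
      using cpos by (simp add: w_def field_simps power2_eq_square[symmetric] sq)
    have h': "herm d \<sigma>'" unfolding herm_def \<sigma>'_def
    proof (intro allI impI)
      fix i j assume "i < d" "j < d"
      then show "\<sigma> j i - w j * cnj (w i) = cnj (\<sigma> i j - w i * cnj (w j))"
        using hs[of i j] by simp
    qed
    have p': "psd d \<sigma>'" unfolding psd_def
    proof
      fix v
      define g where "g = (\<Sum>j<d. \<sigma> s j * v j)"
      have k: "0 \<le> Re (qf d \<sigma> v) + 2 * Re (cnj (- g / of_real c) * g) + (cmod (- g / of_real c))^2 * c"
        using key[of v "- g / of_real c"] by (simp add: g_def c_def)
      have e1: "Re (cnj (- g / of_real c) * g) = - ((cmod g)^2 / c)"
        unfolding cmod_power2 by (simp add: power2_eq_square field_simps)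
      have e2: "(cmod (- g / of_real c))^2 * c = (cmod g)^2 / c"
        using cpos by (simp add: norm_divide power2_eq_square field_simps)
      have q': "qf d \<sigma>' v = qf d \<sigma> v - (\<Sum>i<d. \<Sum>j<d. cnj (v i) * (\<sigma> i s * cnj (\<sigma> j s) / of_real c) * v j)"
        unfolding qf_def \<sigma>'_def ww by (simp add: algebra_simps sum_subtractf)
      have "(\<Sum>i<d. \<Sum>j<d. cnj (v i) * (\<sigma> i s * cnj (\<sigma> j s) / of_real c) * v j)
          = (\<Sum>i<d. cnj (v i) * \<sigma> i s) * (\<Sum>j<d. cnj (\<sigma> j s) * v j) / of_real c"
        by (simp add: sum_distrib_left sum_distrib_right sum_divide_distrib mult_ac)
      also have "(\<Sum>i<d. cnj (v i) * \<sigma> i s) = cnj g"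
      proof -
        have "\<sigma> i s = cnj (\<sigma> s i)" if "i < d" for i using hs[OF sd that] by simp
        then show ?thesis unfolding g_def by (auto intro!: sum.cong)
      qed
      also have "(\<Sum>j<d. cnj (\<sigma> j s) * v j) = g"
      proof -
        have "cnj (\<sigma> i s) = \<sigma> s i" if "i < d" for i using hs[OF sd that] by simp
        then show ?thesis unfolding g_def by (auto intro!: sum.cong)
      qed
      also have "cnj g * g / of_real c = of_real ((cmod g)^2 / c)"
        by (simp only: of_real_divide complex_norm_square mult.commute)
      finally have S: "(\<Sum>i<d. \<Sum>j<d. cnj (v i) * (\<sigma> i s * cnj (\<sigma> j s) / of_real c) * v j) = of_real ((cmod g)^2 / c)" .
      have "Re (qf d \<sigma>' v) = Re (qf d \<sigma> v) - (cmod g)^2 / c" unfolding q' S by simp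
      then show "0 \<le> Re (qf d \<sigma>' v)" using k unfolding e1 e2 by linarith
    qed
    have z: "\<forall>i<d. \<forall>j<d. i < Suc s \<or> j < Suc s \<longrightarrow> \<sigma>' i j = 0"
    proof (intro allI impI)
      fix i j assume ij: "i < d" "j < d" and "i < Suc s \<or> j < Suc s"
      then consider "i < s" | "j < s" | "i = s" | "j = s" by linarith
      then show "\<sigma>' i j = 0"
      proof cases
        case 1 then have "\<sigma> i j = 0" "\<sigma> i s = 0" using Suc.prems(3) ij sd by auto
        then show ?thesis by (simp add: \<sigma>'_def ww)
      next
        case 2 then have "\<sigma> i j = 0" "\<sigma> j s = 0" using Suc.prems(3) ij sd by auto
        then show ?thesis by (simp add: \<sigma>'_def ww)
      next
        case 3 have "\<sigma> s j = cnj (\<sigma> j s)" using hs[OF ij(2) sd] by simp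
          then show ?thesis using 3 cpos sc
            by (simp add: \<sigma>'_def ww)
      next
        case 4 then show ?thesis using cpos sc
            by (simp add: \<sigma>'_def ww)
      qed
    qed
    obtain ws where ws: "\<forall>i<d. \<forall>j<d. \<sigma>' i j = (\<Sum>w\<leftarrow>ws. w i * cnj (w j))"
      using Suc.IH[OF h' p' z] Suc.prems(4) by (metis Suc_diff_Suc diff_Suc_1 sd)
    show ?thesis
      by (intro exI[of _ "w # ws"]) (use ws in \<open>auto simp: \<sigma>'_def algebra_simps\<close>)
  qed
qed




lemma decomp:
  assumes "herm d \<sigma>" "psd d \<sigma>"
  shows "\<exists>(K::nat) (W::nat\<Rightarrow>nat\<Rightarrow>complex). \<forall>i<d. \<forall>j<d. \<sigma> i j = (\<Sum>k<K. W k i * cnj (W k j))"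
proof -
  obtain ws where ws: "\<forall>i<d. \<forall>j<d. \<sigma> i j = (\<Sum>w\<leftarrow>ws. w i * cnj (w j))"
    using decomp_aux[OF assms, of 0] by auto
  have "(\<Sum>w\<leftarrow>ws. w i * cnj (w j)) = (\<Sum>k<length ws. (ws!k) i * cnj ((ws!k) j))" for i j
    by (simp add: sum_list_sum_nth atLeast0LessThan)
  then show ?thesis using ws by (intro exI[of _ "length ws"] exI[of _ "\<lambda>k. ws ! k"]) simp
qed

lemma state_herm: "is_state d \<rho> \<Longrightarrow> herm d \<rho>"
  unfolding is_state_def herm_def by blast
lemma state_psd: "is_state d \<rho> \<Longrightarrow> psd d \<rho>"
  unfolding is_state_def psd_def qf_def by blast
lemma state_iff: "is_state d \<rho> \<longleftrightarrow> (\<forall>i j. (d \<le> i \<or> d \<le> j) \<longrightarrow> \<rho> i j = 0) \<and> herm d \<rho> \<and> psd d \<rho>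
   \<and> (\<Sum>i<d. \<rho> i i) = 1"
  unfolding is_state_def psd_def qf_def herm_def by blast

lemma tensor_psd:
  assumes "psd dA \<rho>" "herm dB \<sigma>" "psd dB \<sigma>"
  shows "psd (dA*dB) (tensor dA dB \<rho> \<sigma>)"
  unfolding psd_def
proof
  fix v
  obtain K :: nat and W where W0: "\<forall>i<dB. \<forall>j<dB. \<sigma> i j = (\<Sum>k<K. W k i * cnj (W k j))"
    using decomp[OF assms(2,3)] by blast
  have W: "\<sigma> i j = (\<Sum>k<K. W k i * cnj (W k j))" if "i < dB" "j < dB" for i j
    using W0 that by blast
  define U where "U = (\<lambda>k a. \<Sum>c<dB. cnj (W k c) * v (a*dB + c))"
  have dv: "(a*dB+c) div dB = a" "(a*dB+c) mod dB = c" if "c < dB" for a c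
    using that by simp_all
  have lt: "a*dB + c < dA*dB" if "a < dA" "c < dB" for a c
  proof -
    have "a*dB + c < a*dB + dB" using that by simp
    also have "\<dots> = Suc a * dB" by simp
    also have "\<dots> \<le> dA * dB" using that by (intro mult_right_mono) auto
    finally show ?thesis .
  qed
  have "qf (dA*dB) (tensor dA dB \<rho> \<sigma>) v =
     (\<Sum>a<dA. \<Sum>c<dB. \<Sum>b<dA. \<Sum>e<dB. cnj (v (a*dB+c)) * (\<rho> a b * \<sigma> c e) * v (b*dB+e))"
    unfolding qf_def sum_split_mult
    by (intro sum.cong refl) (simp add: tensor_def dv lt)
  also have "\<dots> = (\<Sum>a<dA. \<Sum>b<dA. \<Sum>c<dB. \<Sum>e<dB. cnj (v (a*dB+c)) * (\<rho> a b * \<sigma> c e) * v (b*dB+e))"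
    by (rule sum.cong[OF refl], rule sum.swap)
  also have "\<dots> = (\<Sum>a<dA. \<Sum>b<dA. \<Sum>k<K. cnj (U k a) * \<rho> a b * U k b)"
  proof (rule sum.cong[OF refl], rule sum.cong[OF refl])
    fix a b
    have "(\<Sum>k<K. cnj (U k a) * \<rho> a b * U k b) =
       (\<Sum>k<K. \<Sum>c<dB. \<Sum>e<dB. W k c * cnj (v (a*dB+c)) * \<rho> a b * (cnj (W k e) * v (b*dB+e)))"
      unfolding U_def by (simp add: sum_distrib_left sum_distrib_right) (rule sum.cong[OF refl], rule sum.swap)
    also have "\<dots> = (\<Sum>c<dB. \<Sum>e<dB. \<Sum>k<K. W k c * cnj (v (a*dB+c)) * \<rho> a b * (cnj (W k e) * v (b*dB+e)))"
      by (subst sum.swap, rule sum.cong[OF refl], rule sum.swap)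
    also have "\<dots> = (\<Sum>c<dB. \<Sum>e<dB. cnj (v (a*dB+c)) * (\<rho> a b * \<sigma> c e) * v (b*dB+e))"
    proof (rule sum.cong[OF refl], rule sum.cong[OF refl])
      fix c e assume ce: "c \<in> {..<dB}" "e \<in> {..<dB}"
      have "cnj (v (a*dB+c)) * (\<rho> a b * \<sigma> c e) * v (b*dB+e)
          = (cnj (v (a*dB+c)) * \<rho> a b * v (b*dB+e)) * \<sigma> c e" by (simp only: mult_ac)
      also have "\<dots> = (\<Sum>k<K. (cnj (v (a*dB+c)) * \<rho> a b * v (b*dB+e)) * (W k c * cnj (W k e)))"
        using ce by (simp add: W sum_distrib_left)
      also have "\<dots> = (\<Sum>k<K. W k c * cnj (v (a*dB+c)) * \<rho> a b * (cnj (W k e) * v (b*dB+e)))"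
        by (rule sum.cong[OF refl]) (simp only: mult_ac)
      finally show "(\<Sum>k<K. W k c * cnj (v (a*dB+c)) * \<rho> a b * (cnj (W k e) * v (b*dB+e))) =
          cnj (v (a*dB+c)) * (\<rho> a b * \<sigma> c e) * v (b*dB+e)" by (rule sym)
    qed
    finally show "(\<Sum>c<dB. \<Sum>e<dB. cnj (v (a*dB+c)) * (\<rho> a b * \<sigma> c e) * v (b*dB+e)) =
       (\<Sum>k<K. cnj (U k a) * \<rho> a b * U k b)" by (rule sym)
  qed
  also have "\<dots> = (\<Sum>k<K. qf dA \<rho> (U k))"
  proof -
    have "(\<Sum>a<dA. \<Sum>b<dA. \<Sum>k<K. cnj (U k a) * \<rho> a b * U k b) = (\<Sum>a<dA. \<Sum>k<K. \<Sum>b<dA. cnj (U k a) * \<rho> a b * U k b)"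
      by (rule sum.cong[OF refl], rule sum.swap)
    also have "\<dots> = (\<Sum>k<K. \<Sum>a<dA. \<Sum>b<dA. cnj (U k a) * \<rho> a b * U k b)"
      by (rule sum.swap)
    finally show ?thesis unfolding qf_def .
  qed
  finally have e: "qf (dA*dB) (tensor dA dB \<rho> \<sigma>) v = (\<Sum>k<K. qf dA \<rho> (U k))" .
  show "0 \<le> Re (qf (dA*dB) (tensor dA dB \<rho> \<sigma>) v)"
    unfolding e Re_sum using assms(1) unfolding psd_def by (intro sum_nonneg) auto
qed

lemma lt_mult_add: "a < dA \<Longrightarrow> c < dB \<Longrightarrow> a*dB + c < dA*(dB::nat)"
proof -
  assume a: "a < dA" "c < dB"
  have "a*dB + c < a*dB + dB" using a by simp
  also have "\<dots> = Suc a * dB" by simp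
  also have "\<dots> \<le> dA * dB" using a by (intro mult_right_mono) auto
  finally show ?thesis .
qed

lemma tensor_state:
  assumes A: "is_state dA \<rho>" and B: "is_state dB \<sigma>"
  shows "is_state (dA*dB) (tensor dA dB \<rho> \<sigma>)"
proof -
  have hA: "herm dA \<rho>" "psd dA \<rho>" using A state_iff by auto
  have hB: "herm dB \<sigma>" "psd dB \<sigma>" using B state_iff by auto
  have trA: "(\<Sum>i<dA. \<rho> i i) = 1" and trB: "(\<Sum>i<dB. \<sigma> i i) = 1" using A B state_iff by auto
  have z: "\<forall>i j. (dA*dB \<le> i \<or> dA*dB \<le> j) \<longrightarrow> tensor dA dB \<rho> \<sigma> i j = 0"
    by (auto simp: tensor_def)
  have h: "herm (dA*dB) (tensor dA dB \<rho> \<sigma>)" unfolding herm_def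
  proof (intro allI impI)
    fix i j assume ij: "i < dA*dB" "j < dA*dB"
    then have pos: "0 < dB" by (cases "dB = 0") auto
    have "i div dB < dA" "j div dB < dA" using ij less_mult_imp_div_less by auto
    moreover have "i mod dB < dB" "j mod dB < dB" using pos by auto
    ultimately have "\<rho> (j div dB) (i div dB) = cnj (\<rho> (i div dB) (j div dB))"
        "\<sigma> (j mod dB) (i mod dB) = cnj (\<sigma> (i mod dB) (j mod dB))"
      using hA(1) hB(1) unfolding herm_def by blast+
    then show "tensor dA dB \<rho> \<sigma> j i = cnj (tensor dA dB \<rho> \<sigma> i j)"
      using ij by (simp add: tensor_def)
  qed
  have tr: "(\<Sum>i<dA*dB. tensor dA dB \<rho> \<sigma> i i) = 1"
  proof -
    have "(\<Sum>i<dA*dB. tensor dA dB \<rho> \<sigma> i i) = (\<Sum>a<dA. \<Sum>c<dB. \<rho> a a * \<sigma> c c)"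
      unfolding sum_split_mult by (intro sum.cong refl) (simp add: tensor_def lt_mult_add)
    also have "\<dots> = (\<Sum>a<dA. \<rho> a a) * (\<Sum>c<dB. \<sigma> c c)" by (simp add: sum_product)
    finally show ?thesis using trA trB by simp
  qed
  show ?thesis unfolding state_iff using z h tr tensor_psd[OF hA(2) hB] by blast
qed

lemma tpow_state: "is_state d \<rho> \<Longrightarrow> is_state (d^n) (tpow d n \<rho>)"
proof (induction n)
  case 0
  have "0 \<le> Re (cnj (v 0) * v 0)" for v :: "nat \<Rightarrow> complex"
    by (simp add: complex_mult_cnj[of "v 0", simplified mult.commute])
  then show ?case unfolding is_state_def by (auto simp: is_state_def)
next
  case (Suc n)
  then show ?case using tensor_state[OF Suc.prems Suc.IH] by simp
qed

lemma ptrace_A_state: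
  assumes T: "is_state (dA*dB) \<tau>"
  shows "is_state dB (ptrace_A dA dB \<tau>)"
proof -
  have hT: "herm (dA*dB) \<tau>" "psd (dA*dB) \<tau>" "(\<Sum>i<dA*dB. \<tau> i i) = 1" using T state_iff by auto
  have z: "\<forall>i j. (dB \<le> i \<or> dB \<le> j) \<longrightarrow> ptrace_A dA dB \<tau> i j = 0"
    by (auto simp: ptrace_A_def)
  have h: "herm dB (ptrace_A dA dB \<tau>)" unfolding herm_def
  proof (intro allI impI)
    fix a b assume ab: "a < dB" "b < dB"
    have "\<tau> (k*dB+b) (k*dB+a) = cnj (\<tau> (k*dB+a) (k*dB+b))" if "k < dA" for k
      using hT(1) lt_mult_add[OF that ab(1)] lt_mult_add[OF that ab(2)] unfolding herm_def by blast
    then show "ptrace_A dA dB \<tau> b a = cnj (ptrace_A dA dB \<tau> a b)"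
      using ab by (simp add: ptrace_A_def)
  qed
  have tr: "(\<Sum>a<dB. ptrace_A dA dB \<tau> a a) = 1"
  proof -
    have "(\<Sum>a<dB. ptrace_A dA dB \<tau> a a) = (\<Sum>a<dB. \<Sum>k<dA. \<tau> (k*dB+a) (k*dB+a))"
      by (simp add: ptrace_A_def)
    also have "\<dots> = (\<Sum>k<dA. \<Sum>a<dB. \<tau> (k*dB+a) (k*dB+a))" by (rule sum.swap)
    also have "\<dots> = (\<Sum>i<dA*dB. \<tau> i i)" by (simp add: sum_split_mult)
    finally show ?thesis using hT(3) by simp
  qed
  have p: "psd dB (ptrace_A dA dB \<tau>)" unfolding psd_def
  proof
    fix v :: "nat \<Rightarrow> complex"
    define V where "V = (\<lambda>k i. if i div dB = k then v (i mod dB) else 0)"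
    have Vv: "V k (x*dB + a) = (if x = k then v a else 0)" if "a < dB" for k x a
      using that by (simp add: V_def)
    have e: "qf (dA*dB) \<tau> (V k) = (\<Sum>a<dB. \<Sum>b<dB. cnj (v a) * \<tau> (k*dB+a) (k*dB+b) * v b)"
      if k: "k < dA" for k
    proof -
      have "qf (dA*dB) \<tau> (V k) = (\<Sum>x<dA. \<Sum>a<dB. \<Sum>y<dA. \<Sum>b<dB.
          (if x = k then cnj (v a) else 0) * \<tau> (x*dB+a) (y*dB+b) * (if y = k then v b else 0))"
        unfolding qf_def sum_split_mult by (intro sum.cong refl) (simp add: Vv)
      also have "\<dots> = (\<Sum>x<dA. if x = k then (\<Sum>a<dB. \<Sum>y<dA. \<Sum>b<dB.
          cnj (v a) * \<tau> (x*dB+a) (y*dB+b) * (if y = k then v b else 0)) else 0)"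
        by (rule sum.cong[OF refl]) simp
      also have "\<dots> = (\<Sum>a<dB. \<Sum>y<dA. \<Sum>b<dB.
          cnj (v a) * \<tau> (k*dB+a) (y*dB+b) * (if y = k then v b else 0))"
        using k by simp
      also have "\<dots> = (\<Sum>a<dB. \<Sum>y<dA. if y = k then (\<Sum>b<dB.
          cnj (v a) * \<tau> (k*dB+a) (y*dB+b) * v b) else 0)"
        by (rule sum.cong[OF refl], rule sum.cong[OF refl]) simp
      also have "\<dots> = (\<Sum>a<dB. \<Sum>b<dB. cnj (v a) * \<tau> (k*dB+a) (k*dB+b) * v b)"
        using k by simp
      finally show ?thesis .
    qed
    have "qf dB (ptrace_A dA dB \<tau>) v = (\<Sum>a<dB. \<Sum>b<dB. \<Sum>k<dA. cnj (v a) * \<tau> (k*dB+a) (k*dB+b) * v b)"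
      unfolding qf_def by (intro sum.cong refl) (simp add: ptrace_A_def sum_distrib_left sum_distrib_right)
    also have "\<dots> = (\<Sum>a<dB. \<Sum>k<dA. \<Sum>b<dB. cnj (v a) * \<tau> (k*dB+a) (k*dB+b) * v b)"
      by (rule sum.cong[OF refl], rule sum.swap)
    also have "\<dots> = (\<Sum>k<dA. \<Sum>a<dB. \<Sum>b<dB. cnj (v a) * \<tau> (k*dB+a) (k*dB+b) * v b)"
      by (rule sum.swap)
    also have "\<dots> = (\<Sum>k<dA. qf (dA*dB) \<tau> (V k))" using e by simp
    finally have "qf dB (ptrace_A dA dB \<tau>) v = (\<Sum>k<dA. qf (dA*dB) \<tau> (V k))" .
    then show "0 \<le> Re (qf dB (ptrace_A dA dB \<tau>) v)"
      using hT(2) unfolding psd_def Re_sum by (auto intro: sum_nonneg)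
  qed
  show ?thesis unfolding state_iff using z h p tr by blast
qed




lemma sum_if_const: "(\<Sum>i\<in>S. if P then f i else 0) = (if P then (\<Sum>i\<in>S. f i) else 0)"
  by (cases P) simp_all

lemma D1:
  assumes "0 < d" "l < m"
  shows "digit d (Suc m) (Suc l) (x1 * d^m + x2) = digit d m l x2"
proof -
  define e where "e = m - 1 - l"
  have e1: "Suc m - 1 - Suc l = e" unfolding e_def by simp
  have me: "m = e + Suc l" using assms(2) unfolding e_def by simp
  have "d^m = d^e * (d * d^l)" unfolding me by (simp add: power_add)
  then have eq: "x1 * d^m + x2 = x2 + (x1 * d^l * d) * d^e" by (simp add: mult_ac)
  have ne: "d^e \<noteq> 0" using assms(1) by simp
  have "(x1 * d^m + x2) div d^e = x1 * d^l * d + x2 div d^e"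
    unfolding eq by (rule div_mult_self1[OF ne])
  then show ?thesis unfolding digit_def e1 e_def[symmetric] by simp
qed

lemma D0:
  assumes "x2 < d^m"
  shows "digit d (Suc m) 0 (x1 * d^m + x2) = x1 mod d"
proof -
  have eq: "x1 * d^m + x2 = x2 + x1 * d^m" by simp
  have ne: "d^m \<noteq> 0" using assms by (metis less_nat_zero_code)
  have "(x1 * d^m + x2) div d^m = x1 + x2 div d^m"
    unfolding eq by (rule div_mult_self1[OF ne])
  then have "(x1 * d^m + x2) div d^m = x1" using assms by simp
  then show ?thesis by (simp add: digit_def)
qed

lemma D2:
  assumes "0 < d" "x < d^m" "y < d^m" "\<forall>l<m. digit d m l x = digit d m l y"
  shows "x = y"
  using assms(2-4)
proof (induction m arbitrary: x y)
  case 0 then show ?case by simp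
next
  case (Suc m)
  have px: "x = (x div d^m) * d^m + x mod d^m" by (rule div_mult_mod_eq[symmetric])
  have py: "y = (y div d^m) * d^m + y mod d^m" by (rule div_mult_mod_eq[symmetric])
  have ml: "x mod d^m < d^m" "y mod d^m < d^m" using assms(1) by simp_all
  have dl: "x div d^m < d" "y div d^m < d" using Suc.prems(1,2) less_mult_imp_div_less
    by (simp_all add: mult.commute)
  have "digit d (Suc m) 0 x = digit d (Suc m) 0 y" using Suc.prems(3) by simp
  then have h1: "x div d^m = y div d^m"
    using D0[OF ml(1), of "x div d^m"] D0[OF ml(2), of "y div d^m"] dl px py by simp
  have "digit d m l (x mod d^m) = digit d m l (y mod d^m)" if "l < m" for l
  proof -
    have "digit d (Suc m) (Suc l) x = digit d (Suc m) (Suc l) y" using Suc.prems(3) that by simp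
    then show ?thesis using D1[OF assms(1) that, of "x div d^m" "x mod d^m"]
        D1[OF assms(1) that, of "y div d^m" "y mod d^m"] px py by simp
  qed
  then have "x mod d^m = y mod d^m" using Suc.IH[OF ml] by blast
  then show ?case using h1 px py by metis
qed

lemma all_Suc_ne0: "(\<forall>l<Suc m. l \<noteq> 0 \<longrightarrow> P l) \<longleftrightarrow> (\<forall>l<m. P (Suc l))"
  by (auto simp: less_Suc_eq_0_disj)

lemma marg0:
  assumes "0 < d"
  shows "marg d (Suc m) 0 \<omega> = ptrace_B d (d^m) \<omega>"
proof (intro ext)
  fix a b
  show "marg d (Suc m) 0 \<omega> a b = ptrace_B d (d^m) \<omega> a b"
  proof (cases "a < d \<and> b < d")
    case False then show ?thesis by (auto simp: marg_def ptrace_B_def)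
  next
    case True
    have cond: "(digit d (Suc m) 0 (x1 * d^m + x2) = a \<and> digit d (Suc m) 0 (y1 * d^m + y2) = b \<and>
        (\<forall>l<Suc m. l \<noteq> 0 \<longrightarrow> digit d (Suc m) l (x1 * d^m + x2) = digit d (Suc m) l (y1 * d^m + y2)))
        \<longleftrightarrow> (x1 = a \<and> y1 = b \<and> x2 = y2)"
      if "x1 < d" "x2 < d^m" "y1 < d" "y2 < d^m" for x1 x2 y1 y2
    proof -
      have "(\<forall>l<Suc m. l \<noteq> 0 \<longrightarrow> digit d (Suc m) l (x1 * d^m + x2) = digit d (Suc m) l (y1 * d^m + y2))
          \<longleftrightarrow> (\<forall>l<m. digit d m l x2 = digit d m l y2)"
        unfolding all_Suc_ne0 using D1[OF assms] by simp
      also have "\<dots> \<longleftrightarrow> x2 = y2" using D2[OF assms that(2,4)] by auto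
      finally show ?thesis using D0[OF that(2)] D0[OF that(4)] that by simp
    qed
    have "marg d (Suc m) 0 \<omega> a b = (\<Sum>x1<d. \<Sum>x2<d^m. \<Sum>y1<d. \<Sum>y2<d^m.
        if y1 = b then (if y2 = x2 then (if x1 = a then \<omega> (x1 * d^m + x2) (y1 * d^m + y2) else 0) else 0) else 0)"
    proof -
      have "marg d (Suc m) 0 \<omega> a b = (\<Sum>x<d*d^m. \<Sum>y<d*d^m.
         if digit d (Suc m) 0 x = a \<and> digit d (Suc m) 0 y = b \<and>
            (\<forall>l<Suc m. l \<noteq> 0 \<longrightarrow> digit d (Suc m) l x = digit d (Suc m) l y)
         then \<omega> x y else 0)" using True by (simp add: marg_def)
      also have "\<dots> = (\<Sum>x1<d. \<Sum>x2<d^m. \<Sum>y1<d. \<Sum>y2<d^m.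
        if y1 = b then (if y2 = x2 then (if x1 = a then \<omega> (x1 * d^m + x2) (y1 * d^m + y2) else 0) else 0) else 0)"
      proof -
        have pt: "(if digit d (Suc m) 0 (x1 * d^m + x2) = a \<and> digit d (Suc m) 0 (y1 * d^m + y2) = b \<and>
            (\<forall>l<Suc m. l \<noteq> 0 \<longrightarrow> digit d (Suc m) l (x1 * d^m + x2) = digit d (Suc m) l (y1 * d^m + y2))
            then \<omega> (x1 * d^m + x2) (y1 * d^m + y2) else 0) =
           (if y1 = b then (if y2 = x2 then (if x1 = a then \<omega> (x1 * d^m + x2) (y1 * d^m + y2) else 0) else 0) else 0)"
          if "x1 \<in> {..<d}" "x2 \<in> {..<d^m}" "y1 \<in> {..<d}" "y2 \<in> {..<d^m}" for x1 x2 y1 y2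
          using cond[of x1 x2 y1 y2] that by auto
        show ?thesis unfolding sum_split_mult
          by (rule sum.cong[OF refl], rule sum.cong[OF refl], rule sum.cong[OF refl], rule sum.cong[OF refl], rule pt)
      qed
      finally show ?thesis .
    qed
    also have "\<dots> = (\<Sum>x1<d. \<Sum>x2<d^m. if x1 = a then \<omega> (x1 * d^m + x2) (b * d^m + x2) else 0)"
      using True by (simp add: sum_if_const)
    also have "\<dots> = (\<Sum>x2<d^m. \<omega> (a * d^m + x2) (b * d^m + x2))"
      using True by (simp add: sum_if_const sum.swap[of _ "{..<d}"])
    also have "\<dots> = ptrace_B d (d^m) \<omega> a b" using True by (simp add: ptrace_B_def)
    finally show ?thesis .
  qed
qed

lemma all_Suc_split: "(\<forall>l<Suc m. Q l) \<longleftrightarrow> Q 0 \<and> (\<forall>l<m. Q (Suc l))"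
  by (auto simp: less_Suc_eq_0_disj)

lemma margSuc:
  assumes "0 < d" "k < m"
  shows "marg d m k (ptrace_A d (d^m) \<omega>) = marg d (Suc m) (Suc k) \<omega>"
proof (intro ext)
  fix a b
  define C where "C = (\<lambda>x y. digit d m k x = a \<and> digit d m k y = b \<and>
       (\<forall>l<m. l \<noteq> k \<longrightarrow> digit d m l x = digit d m l y))"
  show "marg d m k (ptrace_A d (d^m) \<omega>) a b = marg d (Suc m) (Suc k) \<omega> a b"
  proof (cases "a < d \<and> b < d")
    case False then show ?thesis by (auto simp: marg_def)
  next
    case True
    have "marg d m k (ptrace_A d (d^m) \<omega>) a b =
       (\<Sum>x<d^m. \<Sum>y<d^m. if C x y then ptrace_A d (d^m) \<omega> x y else 0)"
      using True by (simp add: marg_def C_def)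
    also have "\<dots> = (\<Sum>x<d^m. \<Sum>y<d^m. if C x y then (\<Sum>c<d. \<omega> (c*d^m + x) (c*d^m + y)) else 0)"
      by (intro sum.cong refl) (simp add: ptrace_A_def)
    finally have L: "marg d m k (ptrace_A d (d^m) \<omega>) a b =
       (\<Sum>x<d^m. \<Sum>y<d^m. if C x y then (\<Sum>c<d. \<omega> (c*d^m + x) (c*d^m + y)) else 0)" .
    have pt: "(if digit d (Suc m) (Suc k) (x1 * d^m + x2) = a \<and> digit d (Suc m) (Suc k) (y1 * d^m + y2) = b \<and>
            (\<forall>l<Suc m. l \<noteq> Suc k \<longrightarrow> digit d (Suc m) l (x1 * d^m + x2) = digit d (Suc m) l (y1 * d^m + y2))
            then \<omega> (x1 * d^m + x2) (y1 * d^m + y2) else 0) =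
           (if y1 = x1 then (if C x2 y2 then \<omega> (x1 * d^m + x2) (y1 * d^m + y2) else 0) else 0)"
      if "x1 \<in> {..<d}" "x2 \<in> {..<d^m}" "y1 \<in> {..<d}" "y2 \<in> {..<d^m}" for x1 x2 y1 y2
    proof -
      have x: "x1 < d" "x2 < d^m" "y1 < d" "y2 < d^m" using that by auto
      have "(\<forall>l<Suc m. l \<noteq> Suc k \<longrightarrow> digit d (Suc m) l (x1 * d^m + x2) = digit d (Suc m) l (y1 * d^m + y2))
        \<longleftrightarrow> (x1 = y1 \<and> (\<forall>l<m. l \<noteq> k \<longrightarrow> digit d m l x2 = digit d m l y2))"
        unfolding all_Suc_split using D0[OF x(2)] D0[OF x(4)] D1[OF assms(1)] x by simp
      moreover have "digit d (Suc m) (Suc k) (x1 * d^m + x2) = digit d m k x2"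
        "digit d (Suc m) (Suc k) (y1 * d^m + y2) = digit d m k y2" using D1[OF assms] by auto
      ultimately show ?thesis unfolding C_def by auto
    qed
    have "marg d (Suc m) (Suc k) \<omega> a b = (\<Sum>x<d*d^m. \<Sum>y<d*d^m.
         if digit d (Suc m) (Suc k) x = a \<and> digit d (Suc m) (Suc k) y = b \<and>
            (\<forall>l<Suc m. l \<noteq> Suc k \<longrightarrow> digit d (Suc m) l x = digit d (Suc m) l y)
         then \<omega> x y else 0)" using True by (simp add: marg_def)
    also have "\<dots> = (\<Sum>x1<d. \<Sum>x2<d^m. \<Sum>y1<d. \<Sum>y2<d^m.
         (if y1 = x1 then (if C x2 y2 then \<omega> (x1 * d^m + x2) (y1 * d^m + y2) else 0) else 0))"
      unfolding sum_split_mult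
      by (rule sum.cong[OF refl], rule sum.cong[OF refl], rule sum.cong[OF refl], rule sum.cong[OF refl], rule pt)
    also have "\<dots> = (\<Sum>x1<d. \<Sum>x2<d^m. \<Sum>y2<d^m.
         (if C x2 y2 then \<omega> (x1 * d^m + x2) (x1 * d^m + y2) else 0))"
      by (rule sum.cong[OF refl], rule sum.cong[OF refl]) (simp add: sum_if_const)
    also have "\<dots> = (\<Sum>x2<d^m. \<Sum>x1<d. \<Sum>y2<d^m.
         (if C x2 y2 then \<omega> (x1 * d^m + x2) (x1 * d^m + y2) else 0))"
      by (rule sum.swap)
    also have "\<dots> = (\<Sum>x2<d^m. \<Sum>y2<d^m. \<Sum>x1<d.
         (if C x2 y2 then \<omega> (x1 * d^m + x2) (x1 * d^m + y2) else 0))"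
      by (rule sum.cong[OF refl], rule sum.swap)
    also have "\<dots> = (\<Sum>x<d^m. \<Sum>y<d^m. if C x y then (\<Sum>c<d. \<omega> (c*d^m + x) (c*d^m + y)) else 0)"
      by (simp only: sum_if_const)
    finally show ?thesis using L by simp
  qed
qed




lemma main_real:
  fixes Ops :: ops and R :: "nat \<Rightarrow> cmat \<Rightarrow> real"
    and d d' :: nat and \<rho> \<rho>' :: cmat and r :: real
  assumes channels: "\<forall>(a, b, \<Lambda>) \<in> Ops. \<forall>\<omega>. is_state a \<omega> \<longrightarrow> is_state b (\<Lambda> \<omega>)"
    and nonneg: "\<forall>dA \<omega>. is_state dA \<omega> \<longrightarrow> 0 \<le> R dA \<omega>"
    and monotone: "\<forall>(a, b, \<Lambda>) \<in> Ops. \<forall>\<omega>. is_state a \<omega> \<longrightarrow> R b (\<Lambda> \<omega>) \<le> R a \<omega>"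
    and additive: "\<forall>dA dB \<omega> \<omega>'. is_state dA \<omega> \<longrightarrow> is_state dB \<omega>' \<longrightarrow>
                     R (dA * dB) (tensor dA dB \<omega> \<omega>') = R dA \<omega> + R dB \<omega>'"
    and superadditive: "\<forall>dA dB \<tau>. is_state (dA * dB) \<tau> \<longrightarrow>
                     R dA (ptrace_B dA dB \<tau>) + R dB (ptrace_A dA dB \<tau>) \<le> R (dA * dB) \<tau>"
    and st: "is_state d \<rho>" and st': "is_state d' \<rho>'"
    and r: "ereal r < Rtilde0 Ops d \<rho> d' \<rho>'"
  shows "r * R d' \<rho>' \<le> R d \<rho>"
proof -
  have d'pos: "0 < d'" using st' by (cases "d' = 0") (auto simp: is_state_def)
  define e where "e = tpow d 0 \<rho>"
  have est: "is_state 1 e" using tpow_state[OF st, of 0] by (simp add: e_def)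
  have "tensor 1 1 e e = e" by (intro ext) (simp add: tensor_def e_def)
  then have "R 1 e = R 1 e + R 1 e" using additive est by (metis mult_1)
  then have R1: "R 1 e = 0" by simp
  have Rtp: "R (d^n) (tpow d n \<rho>) = real n * R d \<rho>" for n
  proof (induction n)
    case 0 then show ?case using R1 by (simp add: e_def)
  next
    case (Suc n)
    have "R (d^Suc n) (tpow d (Suc n) \<rho>) = R d \<rho> + R (d^n) (tpow d n \<rho>)"
      using additive st tpow_state[OF st, of n] by simp
    then show ?case using Suc by (simp add: algebra_simps)
  qed
  have chain: "\<forall>\<omega>. is_state (d'^m) \<omega> \<longrightarrow> (\<forall>i<m. marg d' m i \<omega> = \<rho>') \<longrightarrow> real m * R d' \<rho>' \<le> R (d'^m) \<omega>" for m
  proof (induction m)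
    case 0 then show ?case using nonneg by auto
  next
    case (Suc m)
    show ?case
    proof (intro allI impI)
      fix \<omega> assume om: "is_state (d'^Suc m) \<omega>" and mg: "\<forall>i<Suc m. marg d' (Suc m) i \<omega> = \<rho>'"
      have om': "is_state (d' * d'^m) \<omega>" using om by simp
      have "R d' (ptrace_B d' (d'^m) \<omega>) + R (d'^m) (ptrace_A d' (d'^m) \<omega>) \<le> R (d' * d'^m) \<omega>"
        using superadditive om' by blast
      moreover have "ptrace_B d' (d'^m) \<omega> = \<rho>'" using mg marg0[OF d'pos, of m \<omega>] by auto
      moreover have "real m * R d' \<rho>' \<le> R (d'^m) (ptrace_A d' (d'^m) \<omega>)"
      proof -
        have "is_state (d'^m) (ptrace_A d' (d'^m) \<omega>)" using ptrace_A_state[OF om'] .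
        moreover have "\<forall>i<m. marg d' m i (ptrace_A d' (d'^m) \<omega>) = \<rho>'"
          using mg margSuc[OF d'pos] by auto
        ultimately show ?thesis using Suc.IH by blast
      qed
      ultimately show "real (Suc m) * R d' \<rho>' \<le> R (d' ^ Suc m) \<omega>" by (simp add: algebra_simps)
    qed
  qed
  have key: "real (nat \<lfloor>q * real n\<rfloor>) * R d' \<rho>' \<le> real n * R d \<rho>"
    if ach: "achievable Ops d \<rho> d' \<rho>' n q" for n q
  proof -
    define M where "M = nat \<lfloor>q * real n\<rfloor>"
    obtain \<Lambda> where L: "(d ^ n, d' ^ M, \<Lambda>) \<in> Ops" and mg: "\<forall>i<M. marg d' M i (\<Lambda> (tpow d n \<rho>)) = \<rho>'"
      using ach unfolding achievable_def M_def by blast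
    have ts: "is_state (d^n) (tpow d n \<rho>)" using tpow_state[OF st] .
    have ls: "is_state (d'^M) (\<Lambda> (tpow d n \<rho>))" using channels L ts by blast
    have "real M * R d' \<rho>' \<le> R (d'^M) (\<Lambda> (tpow d n \<rho>))" using chain ls mg by blast
    also have "\<dots> \<le> R (d^n) (tpow d n \<rho>)" using monotone L ts by blast
    finally show ?thesis unfolding M_def Rtp .
  qed
  define s where "s = (\<lambda>n. Sup {ereal q | q. achievable Ops d \<rho> d' \<rho>' n q})"
  obtain r2 where r2: "ereal r < ereal r2" "ereal r2 < Rtilde0 Ops d \<rho> d' \<rho>'"
    using ereal_dense2[OF r] by blast
  have freq: "\<forall>N. \<exists>n\<ge>N. ereal r2 < s n"
  proof (rule ccontr)
    assume "\<not> (\<forall>N. \<exists>n\<ge>N. ereal r2 < s n)"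
    then obtain N where "\<forall>n\<ge>N. s n \<le> ereal r2" by (auto simp: not_less)
    then have "eventually (\<lambda>n. s n \<le> ereal r2) sequentially" by (auto simp: eventually_sequentially)
    then have "limsup s \<le> ereal r2" by (rule Limsup_bounded)
    then show False using r2(2) unfolding Rtilde0_def s_def by simp
  qed
  have rr: "r < r2" using r2 by simp
  obtain N :: nat where N: "1 / (r2 - r) < real N" using reals_Archimedean2 by blast
  obtain n where n: "n \<ge> Suc N" "ereal r2 < s n" using freq by blast
  obtain q where q: "achievable Ops d \<rho> d' \<rho>' n q" "r2 < q"
    using n(2) unfolding s_def less_Sup_iff by auto
  have q0: "0 \<le> q" using q(1) by (simp add: achievable_def)
  have npos: "0 < real n" using n by simp
  have Rp: "0 \<le> R d' \<rho>'" "0 \<le> R d \<rho>" using nonneg st st' by auto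
  have fl: "q * real n - 1 \<le> real (nat \<lfloor>q * real n\<rfloor>)"
    using q0 npos by linarith
  have "1 / real n < r2 - r"
  proof -
    have "1 / (r2 - r) < real n" using N n by linarith
    then show ?thesis using rr npos by (simp add: field_simps)
  qed
  then have rl: "r \<le> q - 1 / real n" using q(2) by linarith
  have "(q * real n - 1) * R d' \<rho>' \<le> real n * R d \<rho>"
    using key[OF q(1)] fl Rp mult_right_mono by (meson order_trans)
  then have "(q - 1 / real n) * R d' \<rho>' \<le> R d \<rho>"
    using npos by (simp add: field_simps)
  moreover have "r * R d' \<rho>' \<le> (q - 1 / real n) * R d' \<rho>'"
    using rl Rp by (intro mult_right_mono) auto
  ultimately show ?thesis by linarith
qed
theorem mainTheorem13:
  fixes Ops :: ops and R :: "nat \<Rightarrow> cmat \<Rightarrow> real"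
    and d d' :: nat and \<rho> \<rho>' :: cmat and r :: real
  assumes channels: "\<forall>(a, b, \<Lambda>) \<in> Ops. \<forall>\<omega>. is_state a \<omega> \<longrightarrow> is_state b (\<Lambda> \<omega>)"
    and nonneg: "\<forall>dA \<omega>. is_state dA \<omega> \<longrightarrow> 0 \<le> R dA \<omega>"
    and monotone: "\<forall>(a, b, \<Lambda>) \<in> Ops. \<forall>\<omega>. is_state a \<omega> \<longrightarrow> R b (\<Lambda> \<omega>) \<le> R a \<omega>"
    and additive: "\<forall>dA dB \<omega> \<omega>'. is_state dA \<omega> \<longrightarrow> is_state dB \<omega>' \<longrightarrow>
                     R (dA * dB) (tensor dA dB \<omega> \<omega>') = R dA \<omega> + R dB \<omega>'"
    and superadditive: "\<forall>dA dB \<tau>. is_state (dA * dB) \<tau> \<longrightarrow>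
                     R dA (ptrace_B dA dB \<tau>) + R dB (ptrace_A dA dB \<tau>) \<le> R (dA * dB) \<tau>"
    and st: "is_state d \<rho>" and st': "is_state d' \<rho>'"
    and r: "ereal r < Rtilde0 Ops d \<rho> d' \<rho>'"
  shows "r * R d' \<rho>' \<le> R d \<rho> \<and> Rtilde0 Ops d \<rho> d' \<rho>' * ereal (R d' \<rho>') \<le> ereal (R d \<rho>)"
proof -
  have gen: "r' * R d' \<rho>' \<le> R d \<rho>" if "ereal r' < Rtilde0 Ops d \<rho> d' \<rho>'" for r'
    using main_real[OF channels nonneg monotone additive superadditive st st' that] .
  have Rp: "0 \<le> R d' \<rho>'" "0 \<le> R d \<rho>" using nonneg st st' by auto
  have second: "Rtilde0 Ops d \<rho> d' \<rho>' * ereal (R d' \<rho>') \<le> ereal (R d \<rho>)"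
  proof (cases "R d' \<rho>' = 0")
    case True then show ?thesis using Rp by (simp add: zero_ereal_def[symmetric])
  next
    case False
    then have Rpos: "0 < R d' \<rho>'" using Rp by simp
    show ?thesis
    proof (cases "Rtilde0 Ops d \<rho> d' \<rho>'")
      case (real t)
      have "t * R d' \<rho>' \<le> R d \<rho>"
      proof (rule ccontr)
        assume "\<not> ?thesis"
        then have lt: "R d \<rho> < t * R d' \<rho>'" by simp
        define r' where "r' = (t + R d \<rho> / R d' \<rho>') / 2"
        have "R d \<rho> / R d' \<rho>' < t" using lt Rpos by (simp add: field_simps)
        then have "r' < t" unfolding r'_def by simp
        then have "r' * R d' \<rho>' \<le> R d \<rho>" using gen real by simp
        moreover have "R d \<rho> < r' * R d' \<rho>'"
          using lt Rpos unfolding r'_def by (simp add: field_simps)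
        ultimately show False by simp
      qed
      then show ?thesis using real by simp
    next
      case PInf
      have "(R d \<rho> / R d' \<rho>' + 1) * R d' \<rho>' \<le> R d \<rho>" using gen PInf by simp
      then have False using Rpos by (simp add: field_simps) (metis mult_pos_pos not_less)
      then show ?thesis ..
    next
      case MInf then show ?thesis using r by simp
    qed
  qed
  show ?thesis using gen[OF r] second by blast
qed


end
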